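(* Let $\mathbb K$ be a field of characteristic $2$ and $D\in\mathbb K[X]$. There exist $p,q\in\mathbb K[X]$ with $q\ne0$ and $\eta\in\mathbb K^*$ such that $p^2-Dq^2=\eta$ if and only if there exist $E\in\mathbb K[X]$ and $r\in\mathbb K$ with $D=E^2+r$. Moreover, one can take $r=0$ (i.e. $D$ is a square in $\mathbb K[X]$) if and only if there is such a solution with $\eta$ a square in $\mathbb K$. *)

theory Defs
  imports "HOL-Computational_Algebra.Polynomial"
begin

end

theory Submission
  imports Defs
begin

lemma gen1: "(a::'b::comm_ring_1) + (m*q)^2 + (d + m^2)*q^2 = a + d*q^2 + 2*(m^2*q^2)"
  by (simp add: algebra_simps power_mult_distrib)

lemma gen2: "(d::'b::ab_semigroup_add) = d' + m \<Longrightarrow> d' = e + r \<Longrightarrow> d = (e + m) + r"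
  by (simp add: add_ac)

lemma gen3: "(a::'b::comm_semiring_1) + 1 + a = 2*a + 1"
  by (simp add: algebra_simps mult_2 mult_2_right)

lemma gen4: "(a::'b::comm_semiring_1) + e*q + (a + d*q) = 2*a + (e + d)*q"
  by (simp add: algebra_simps mult_2 mult_2_right)

lemma gen5: "(a::'b::semiring_1) + a + r = 2*a + r"
  by (simp add: algebra_simps mult_2 mult_2_right)

context
  fixes dummy :: "'a::field"
  assumes ch: "CHAR('a) = 2"
begin

lemma two0: "(2::'a poly) = 0"
proof -
  have "of_nat CHAR('a poly) = (0::'a poly)" by (rule of_nat_CHAR)
  thus ?thesis using ch by simp
qed

lemma two0c: "(2::'a) = 0"
proof -
  have "of_nat CHAR('a) = (0::'a)" by (rule of_nat_CHAR)
  thus ?thesis using ch by simp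
qed

lemma negid: "- (x::'a poly) = x"
proof -
  have "x + x = 2 * x" by simp
  hence "x + x = 0" using two0 by simp
  thus ?thesis by (simp add: add_eq_0_iff2 eq_neg_iff_add_eq_0)
qed

lemma minus_is_plus: "(x::'a poly) - y = x + y"
  using negid[of y] by (metis diff_conv_add_uminus)

lemma sq_add: "((a::'a poly) + b)^2 = a^2 + b^2"
proof -
  have "(a+b)^2 = a^2 + b^2 + 2*(a*b)" by (simp add: power2_eq_square algebra_simps)
  thus ?thesis using two0 by simp
qed

lemma key:
  "q \<noteq> 0 \<Longrightarrow> p\<^sup>2 - D * q\<^sup>2 = [:\<eta>::'a:] \<Longrightarrow> \<exists>E r. D = E\<^sup>2 + [:r:]"
proof (induction "degree D" arbitrary: D p q \<eta> rule: less_induct)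
  case (less D p q \<eta>)
  show ?case
  proof (cases "degree D = 0")
    case True
    then obtain r where "D = [:r:]" by (rule degree_eq_zeroE)
    hence "D = 0\<^sup>2 + [:r:]" by simp
    thus ?thesis by blast
  next
    case False
    have D0: "D \<noteq> 0" using False by auto
    have pe: "p\<^sup>2 = D * q\<^sup>2 + [:\<eta>:]" using less.prems(2) by (simp add: algebra_simps)
    have dq: "degree (D * q\<^sup>2) = degree D + 2 * degree q"
      using D0 less.prems(1) by (simp add: degree_mult_eq degree_power_eq)
    have lt: "degree [:\<eta>:] < degree (D * q\<^sup>2)" using dq False by simp
    have dp: "degree (p\<^sup>2) = degree D + 2 * degree q"
      using pe dq lt by (simp add: degree_add_eq_left)
    have p0: "p \<noteq> 0" using dp False by auto
    have dp2: "degree (p\<^sup>2) = 2 * degree p" using p0 by (simp add: degree_power_eq)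
    define k where "k = degree p - degree q"
    have dD: "degree D = 2 * k" using dp dp2 k_def by simp
    have lcp: "lead_coeff p ^ 2 = lead_coeff D * lead_coeff q ^ 2"
    proof -
      have "lead_coeff (p\<^sup>2) = lead_coeff ([:\<eta>:] + D * q\<^sup>2)"
        using pe by (simp add: add.commute)
      also have "\<dots> = lead_coeff (D * q\<^sup>2)" by (rule lead_coeff_add_le[OF lt])
      finally have "lead_coeff (p\<^sup>2) = lead_coeff (D * q\<^sup>2)" .
      thus ?thesis by (simp add: lead_coeff_mult lead_coeff_power)
    qed
    define s where "s = lead_coeff p / lead_coeff q"
    have lq: "lead_coeff q \<noteq> 0" using less.prems(1) by simp
    have s2: "s^2 = lead_coeff D" using lcp lq unfolding s_def
      by (simp add: power_divide field_simps)
    define D' where "D' = D - (monom s k)\<^sup>2"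
    have mk: "(monom s k)\<^sup>2 = monom (lead_coeff D) (degree D)"
      using s2 dD by (simp add: monom_power mult.commute)
    have dD': "degree D' < degree D"
    proof (rule degree_lessI)
      show "D' \<noteq> 0 \<or> 0 < degree D" using False by simp
      show "\<forall>k\<ge>degree D. coeff D' k = 0"
        unfolding D'_def mk by (auto simp: coeff_monom coeff_eq_0)
    qed
    define p' where "p' = p - monom s k * q"
    have "p'\<^sup>2 - D' * q\<^sup>2 = [:\<eta>:]"
    proof -
      have e1: "p' = p + monom s k * q" unfolding p'_def by (rule minus_is_plus)
      have e2: "D' = D + (monom s k)\<^sup>2" unfolding D'_def by (rule minus_is_plus)
      have "p'\<^sup>2 - D' * q\<^sup>2 = p'\<^sup>2 + D' * q\<^sup>2" by (rule minus_is_plus)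
      also have "\<dots> = p\<^sup>2 + (monom s k * q)\<^sup>2 + (D + (monom s k)\<^sup>2) * q\<^sup>2"
        unfolding e1 e2 sq_add ..
      also have "\<dots> = p\<^sup>2 + D * q\<^sup>2 + 2 * ((monom s k)\<^sup>2 * q\<^sup>2)"
        by (rule gen1)
      also have "\<dots> = p\<^sup>2 + D * q\<^sup>2" unfolding two0 by simp
      also have "\<dots> = p\<^sup>2 - D * q\<^sup>2" by (rule minus_is_plus[symmetric])
      also have "\<dots> = [:\<eta>:]" by (rule less.prems(2))
      finally show ?thesis .
    qed
    from less.hyps[OF dD' less.prems(1) this] obtain E r where "D' = E\<^sup>2 + [:r:]" by blast
    hence "D = (E + monom s k)\<^sup>2 + [:r:]"
    proof -
      have "D = D' + (monom s k)\<^sup>2" unfolding D'_def by simp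
      from gen2[OF this \<open>D' = E\<^sup>2 + [:r:]\<close>] show ?thesis unfolding sq_add .
    qed
    thus ?thesis by blast
  qed
qed

end

theorem mainTheorem18:
  fixes D :: "'a::field poly"
  assumes "CHAR('a) = 2"
  shows "((\<exists>p q \<eta>. q \<noteq> 0 \<and> \<eta> \<noteq> 0 \<and> p\<^sup>2 - D * q\<^sup>2 = [:\<eta>:])
            \<longleftrightarrow> (\<exists>E r. D = E\<^sup>2 + [:r:]))
       \<and> ((\<exists>E. D = E\<^sup>2)
            \<longleftrightarrow> (\<exists>p q \<eta>. q \<noteq> 0 \<and> \<eta> \<noteq> 0 \<and> p\<^sup>2 - D * q\<^sup>2 = [:\<eta>:]
                         \<and> (\<exists>s. \<eta> = s\<^sup>2)))"
proof -
  note mp = minus_is_plus[OF assms] and sa = sq_add[OF assms] and ky = key[OF assms]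
  have sqsol: "\<exists>p q \<eta>. q \<noteq> 0 \<and> \<eta> \<noteq> 0 \<and> p\<^sup>2 - D * q\<^sup>2 = [:\<eta>:] \<and> (\<exists>s. \<eta> = s\<^sup>2)"
    if "D = E\<^sup>2" for E
  proof -
    have "(E + 1)\<^sup>2 - D * 1\<^sup>2 = [:1:]"
    proof -
      have "(E + 1)\<^sup>2 - D * 1\<^sup>2 = (E + 1)\<^sup>2 + D" using mp[of "(E + 1)\<^sup>2" "D * 1\<^sup>2"] by simp
      also have "\<dots> = 2 * E\<^sup>2 + 1" unfolding sa that by (simp add: gen3)
      finally have "(E + 1)\<^sup>2 - D * 1\<^sup>2 = 2 * E\<^sup>2 + 1" .
      thus ?thesis unfolding two0[OF assms] by (simp add: one_pCons)
    qed
    moreover have "(1::'a) = 1\<^sup>2" by simp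
    moreover have "(1::'a poly) \<noteq> 0" "(1::'a) \<noteq> 0" by simp_all
    ultimately show ?thesis by blast
  qed
  have A: "(\<exists>p q \<eta>. q \<noteq> 0 \<and> \<eta> \<noteq> 0 \<and> p\<^sup>2 - D * q\<^sup>2 = [:\<eta>:]) \<longleftrightarrow> (\<exists>E r. D = E\<^sup>2 + [:r:])"
  proof
    assume "\<exists>p q \<eta>. q \<noteq> 0 \<and> \<eta> \<noteq> 0 \<and> p\<^sup>2 - D * q\<^sup>2 = [:\<eta>:]"
    then obtain p q \<eta> where "q \<noteq> 0" "p\<^sup>2 - D * q\<^sup>2 = [:\<eta>:]" by blast
    from ky[OF this] show "\<exists>E r. D = E\<^sup>2 + [:r:]" .
  next
    assume "\<exists>E r. D = E\<^sup>2 + [:r:]"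
    then obtain E r where Er: "D = E\<^sup>2 + [:r:]" by blast
    show "\<exists>p q \<eta>. q \<noteq> 0 \<and> \<eta> \<noteq> 0 \<and> p\<^sup>2 - D * q\<^sup>2 = [:\<eta>:]"
    proof (cases "r = 0")
      case True
      hence "D = E\<^sup>2" using Er by simp
      thus ?thesis using sqsol[of E] by blast
    next
      case False
      have "E\<^sup>2 - D * 1\<^sup>2 = [:-r:]"
        using Er by simp
      moreover have "-r \<noteq> 0" using False by simp
      moreover have "(1::'a poly) \<noteq> 0" by simp
      ultimately show ?thesis by blast
    qed
  qed
  have B: "(\<exists>E. D = E\<^sup>2) \<longleftrightarrow> (\<exists>p q \<eta>. q \<noteq> 0 \<and> \<eta> \<noteq> 0 \<and> p\<^sup>2 - D * q\<^sup>2 = [:\<eta>:] \<and> (\<exists>s. \<eta> = s\<^sup>2))"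
  proof
    assume "\<exists>E. D = E\<^sup>2" thus "\<exists>p q \<eta>. q \<noteq> 0 \<and> \<eta> \<noteq> 0 \<and> p\<^sup>2 - D * q\<^sup>2 = [:\<eta>:] \<and> (\<exists>s. \<eta> = s\<^sup>2)"
      using sqsol by blast
  next
    assume "\<exists>p q \<eta>. q \<noteq> 0 \<and> \<eta> \<noteq> 0 \<and> p\<^sup>2 - D * q\<^sup>2 = [:\<eta>:] \<and> (\<exists>s. \<eta> = s\<^sup>2)"
    then obtain p q \<eta> s where h: "q \<noteq> 0" "p\<^sup>2 - D * q\<^sup>2 = [:\<eta>:]" "\<eta> = s\<^sup>2" by blast
    obtain E r where Er: "D = E\<^sup>2 + [:r:]" using ky[OF h(1) h(2)] by blast
    define t where "t = p + E * q + [:s:]"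
    have "[:s:]\<^sup>2 = [:\<eta>:]" using h(3) by (simp add: power2_eq_square)
    have tt: "t\<^sup>2 = [:r:] * q\<^sup>2"
    proof -
      have "t\<^sup>2 = p\<^sup>2 + E\<^sup>2 * q\<^sup>2 + [:s:]\<^sup>2" unfolding t_def sa by (simp add: power_mult_distrib)
      also have "\<dots> = p\<^sup>2 + E\<^sup>2 * q\<^sup>2 + (p\<^sup>2 - D * q\<^sup>2)" using h(2) \<open>[:s:]\<^sup>2 = [:\<eta>:]\<close> by simp
      also have "\<dots> = p\<^sup>2 + E\<^sup>2 * q\<^sup>2 + (p\<^sup>2 + D * q\<^sup>2)" by (simp only: mp)
      also have "\<dots> = 2 * p\<^sup>2 + (E\<^sup>2 + D) * q\<^sup>2" by (rule gen4)
      also have "\<dots> = (E\<^sup>2 + D) * q\<^sup>2" unfolding two0[OF assms] by simp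
      also have "E\<^sup>2 + D = [:r:]"
      proof -
        have "E\<^sup>2 + D = E\<^sup>2 + E\<^sup>2 + [:r:]" unfolding Er by (simp add: add.assoc)
        also have "\<dots> = [:r:]" unfolding gen5 two0[OF assms] by simp
        finally show ?thesis .
      qed
      finally show ?thesis .
    qed
    show "\<exists>E. D = E\<^sup>2"
    proof (cases "r = 0")
      case True thus ?thesis using Er by auto
    next
      case False
      have "lead_coeff t ^ 2 = r * lead_coeff q ^ 2"
        using arg_cong[OF tt, of lead_coeff] by (simp add: lead_coeff_mult lead_coeff_power)
      hence "r = (lead_coeff t / lead_coeff q)^2" using h(1) by (simp add: power_divide)
      hence "[:r:] = [:lead_coeff t / lead_coeff q:]\<^sup>2" by (simp add: power2_eq_square)
      hence "D = (E + [:lead_coeff t / lead_coeff q:])\<^sup>2" unfolding Er sa by simp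
      thus ?thesis by blast
    qed
  qed
  show ?thesis using A B by blast
qed

end
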